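(* Let $n\ge3$ be an odd integer and let $x\in\mathcal{D}_n$ have order $m$. Then the degree of $x$ in $OD(\mathcal{D}_n)$ is $$\deg(x)=\begin{cases} m-2\phi(m)+\sum_{\lambda\mid\frac{n}{m}}\phi(\lambda m), & m>2,\\ 2n-1, & m=1,\\ 1, & m=2,\end{cases}$$ where $\phi$ is Euler's totient function.
   Context: The dihedral group $\mathcal{D}_n$ ($n\ge3$) is the group $\langle a,b\mid a^n=b^2=(ab)^2=e\rangle$ of order $2n$. For a finite group $G$, $o(x)$ denotes the order of $x\in G$. The order-divisor graph $OD(G)$ is the simple undirected graph with vertex set $G$, in which two distinct vertices $x,y$ are adjacent if and only if $o(x)\neq o(y)$ and either $o(x)\mid o(y)$ or $o(y)\mid o(x)$. *)

theory Defs
  imports "HOL-Algebra.Multiplicative_Group" "HOL-Algebra.Generated_Groups" "HOL-Number_Theory.Totient"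
begin

definition OD_adj :: "('a, 'b) monoid_scheme \<Rightarrow> 'a \<Rightarrow> 'a \<Rightarrow> bool" where
  "OD_adj G x y \<longleftrightarrow> x \<noteq> y \<and> group.ord G x \<noteq> group.ord G y \<and>
     (group.ord G x dvd group.ord G y \<or> group.ord G y dvd group.ord G x)"

definition OD_degree :: "('a, 'b) monoid_scheme \<Rightarrow> 'a \<Rightarrow> nat" where
  "OD_degree G x = card {y \<in> carrier G. OD_adj G x y}"

text \<open>G is (a copy of) the dihedral group D_n = <a,b | a^n = b^2 = (ab)^2 = e> of order 2n:
  generated by a, b satisfying the relations and having order 2n (this determines G up to
  isomorphism).\<close>
definition is_dihedral :: "('a, 'b) monoid_scheme \<Rightarrow> nat \<Rightarrow> bool" where
  "is_dihedral G n \<longleftrightarrow> group G \<and> finite (carrier G) \<and> order G = 2 * n \<and>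
     (\<exists>a\<in>carrier G. \<exists>b\<in>carrier G. generate G {a, b} = carrier G \<and>
        a [^]\<^bsub>G\<^esub> n = \<one>\<^bsub>G\<^esub> \<and> b [^]\<^bsub>G\<^esub> (2::nat) = \<one>\<^bsub>G\<^esub> \<and>
        (a \<otimes>\<^bsub>G\<^esub> b) [^]\<^bsub>G\<^esub> (2::nat) = \<one>\<^bsub>G\<^esub>)"

end

theory Submission imports Defs begin
lemma count_div:
  assumes "0 < (n::nat)" "d dvd n"
  shows "card {k\<in>{..<n}. n div gcd n k = d} = totient d"
proof -
  have d0: "d > 0" using assms by (auto intro: Nat.gr0I)
  have eq: "{k\<in>{..<n}. n div gcd n k = d} = {k\<in>{..<n}. gcd k n = n div d}"
  proof (intro Collect_cong conj_cong refl)
    fix k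
    have g: "gcd n k dvd n" "gcd n k > 0" using assms by auto
    show "(n div gcd n k = d) = (gcd k n = n div d)"
      using g assms d0
      by (metis dvd_div_eq_mult dvd_mult_div_cancel gcd.commute mult.commute nonzero_mult_div_cancel_left not_gr0 div_mult_self1_is_m)
  qed
  define h where "h = (\<lambda>k::nat. if k = 0 then n else k)"
  have bij: "bij_betw h {k\<in>{..<n}. gcd k n = n div d} {k\<in>{0<..n}. gcd k n = n div d}"
    unfolding bij_betw_def
  proof
    show "inj_on h {k \<in> {..<n}. gcd k n = n div d}"
      by (auto simp: inj_on_def h_def split: if_splits)
    show "h ` {k \<in> {..<n}. gcd k n = n div d} = {k \<in> {0<..n}. gcd k n = n div d}"
    proof (intro equalityI subsetI)
      fix y assume "y \<in> h ` {k \<in> {..<n}. gcd k n = n div d}"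
      then show "y \<in> {k \<in> {0<..n}. gcd k n = n div d}" using assms by (auto simp: h_def)
    next
      fix y assume y: "y \<in> {k \<in> {0<..n}. gcd k n = n div d}"
      show "y \<in> h ` {k \<in> {..<n}. gcd k n = n div d}"
      proof (cases "y = n")
        case True
        then have "h 0 = y" "0 \<in> {k \<in> {..<n}. gcd k n = n div d}" using y assms by (auto simp: h_def)
        then show ?thesis by (metis image_eqI)
      next
        case False
        then have "h y = y" "y \<in> {k \<in> {..<n}. gcd k n = n div d}" using y by (auto simp: h_def)
        then show ?thesis by (metis image_eqI)
      qed
    qed
  qed
  have "card {k\<in>{0<..n}. gcd k n = n div d} = totient (n div (n div d))"
    by (rule card_gcd_eq_totient) (use assms in auto)
  also have "n div (n div d) = d" using assms d0
    by (metis dvd_div_mult_self dvd_triv_left div_mult_self1_is_m div_dvd_div dvd_div_eq_0_iff nonzero_mult_div_cancel_right not_gr0)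
  finally show ?thesis using eq bij_betw_same_card[OF bij] by simp
qed

lemma count_sum:
  assumes "0 < (n::nat)"
  shows "card {k\<in>{..<n}. P (n div gcd n k)} = (\<Sum>d\<in>{d. d dvd n \<and> P d}. totient d)"
proof -
  have eq: "{k\<in>{..<n}. P (n div gcd n k)} = (\<Union>d\<in>{d. d dvd n \<and> P d}. {k\<in>{..<n}. n div gcd n k = d})"
    by (auto simp: div_dvd_div[symmetric] dvd_div_eq_mult) (metis dvd_div_mult_self gcd_dvd1 dvd_triv_left)
  have fin: "finite {d. d dvd n \<and> P d}" using assms by auto
  have "card (\<Union>d\<in>{d. d dvd n \<and> P d}. {k\<in>{..<n}. n div gcd n k = d}) =
        (\<Sum>d\<in>{d. d dvd n \<and> P d}. card {k\<in>{..<n}. n div gcd n k = d})"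
    by (rule card_UN_disjoint[OF fin]) auto
  also have "\<dots> = (\<Sum>d\<in>{d. d dvd n \<and> P d}. totient d)"
    by (rule sum.cong) (use count_div assms in auto)
  finally show ?thesis using eq by simp
qed

lemma sumQ:
  assumes "0 < (n::nat)" "m dvd n" "0 < m"
  shows "int (\<Sum>d\<in>{d. d dvd n \<and> d \<noteq> m \<and> (d dvd m \<or> m dvd d)}. totient d) =
         int m - 2 * int (totient m) + (\<Sum>l\<in>{l. l dvd n div m}. int (totient (l * m)))"
proof -
  define A where "A = {d. d dvd m \<and> d \<noteq> m}"
  define B where "B = {d. d dvd n \<and> m dvd d \<and> d \<noteq> m}"
  define C where "C = {d. d dvd n \<and> m dvd d}"
  have finA: "finite A" using assms unfolding A_def by auto
  have finC: "finite C" using assms unfolding C_def by auto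
  have finB: "finite B" using finC unfolding B_def C_def by (rule rev_finite_subset) auto
  have un: "{d. d dvd n \<and> d \<noteq> m \<and> (d dvd m \<or> m dvd d)} = A \<union> B"
    unfolding A_def B_def using assms(2) dvd_trans by blast
  have dis: "A \<inter> B = {}" unfolding A_def B_def using dvd_antisym by blast
  have sA: "(\<Sum>d\<in>A. totient d) + totient m = m"
  proof -
    have "{d. d dvd m} = insert m A" unfolding A_def by auto
    moreover have "m \<notin> A" unfolding A_def by auto
    ultimately show ?thesis using totient_divisor_sum[of m] finA by simp
  qed
  have sC: "(\<Sum>d\<in>B. totient d) + totient m = (\<Sum>d\<in>C. totient d)"
  proof -
    have "C = insert m B" unfolding B_def C_def using assms by auto
    moreover have "m \<notin> B" unfolding B_def by auto
    ultimately show ?thesis using finB by simp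
  qed
  have reidx: "(\<Sum>d\<in>C. totient d) = (\<Sum>l\<in>{l. l dvd n div m}. totient (l * m))"
  proof -
    have inj: "inj_on (\<lambda>l. l * m) {l. l dvd n div m}" using assms by (auto simp: inj_on_def)
    have img: "(\<lambda>l. l * m) ` {l. l dvd n div m} = C"
    proof (intro equalityI subsetI)
      fix d assume "d \<in> (\<lambda>l. l * m) ` {l. l dvd n div m}"
      then obtain l where l: "l dvd n div m" "d = l * m" by auto
      then show "d \<in> C" unfolding C_def using assms
        by (metis dvd_div_mult_self dvd_triv_right mult_dvd_mono dvd_refl mem_Collect_eq)
    next
      fix d assume "d \<in> C"
      then obtain l where "d = m * l" "d dvd n" unfolding C_def by auto
      then have "l dvd n div m" "d = l * m" using assms
        by (auto simp: mult.commute)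
      then show "d \<in> (\<lambda>l. l * m) ` {l. l dvd n div m}" by auto
    qed
    show ?thesis using sum.reindex[OF inj, of totient] img by (simp add: o_def)
  qed
  have "(\<Sum>d\<in>{d. d dvd n \<and> d \<noteq> m \<and> (d dvd m \<or> m dvd d)}. totient d) = (\<Sum>d\<in>A. totient d) + (\<Sum>d\<in>B. totient d)"
    unfolding un using sum.union_disjoint[OF finA finB dis] by simp
  then have "int (\<Sum>d\<in>{d. d dvd n \<and> d \<noteq> m \<and> (d dvd m \<or> m dvd d)}. totient d) =
     int m - 2 * int (totient m) + int (\<Sum>l\<in>{l. l dvd n div m}. totient (l * m))"
    using sA sC reidx by linarith
  then show ?thesis by simp
qed
lemma (in group) dih_struct:
  assumes fin: "finite (carrier G)" and ordG: "order G = 2 * n" and n1: "n \<ge> 1"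
    and ab: "a \<in> carrier G" "b \<in> carrier G"
    and gen: "generate G {a, b} = carrier G"
    and ra: "a [^] n = \<one>" and rb: "b [^] (2::nat) = \<one>" and rab: "(a \<otimes> b) [^] (2::nat) = \<one>"
  shows "carrier G = (\<lambda>(k::nat,e::nat). a [^] k \<otimes> b [^] e) ` ({..<n} \<times> {..<(2::nat)})"
    and "inj_on (\<lambda>(k::nat,e::nat). a [^] k \<otimes> b [^] e) ({..<n} \<times> {..<(2::nat)})"
    and "\<And>k::nat. ord (a [^] k) = n div gcd n k"
    and "\<And>k::nat. ord (a [^] k \<otimes> b) = 2"
proof -
  note [simp] = ab
  have bb: "b \<otimes> b = \<one>" using rb by (simp add: numeral_2_eq_2)
  have abab: "a \<otimes> (b \<otimes> a \<otimes> b) = \<one>" using rab by (simp add: numeral_2_eq_2 m_assoc)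
  have ia: "inv a = a [^] (n - 1)"
  proof -
    have "a [^] (n - 1) \<otimes> a = \<one>" using ra n1 by (metis nat_pow_Suc Suc_diff_1 less_le_trans zero_less_one)
    then show ?thesis by (simp add: inv_equality)
  qed
  have bab: "b \<otimes> a \<otimes> b = a [^] (n - 1)"
    using abab by (metis ia inv_equality inv_comm m_closed ab)
  have swapk: "b \<otimes> a [^] k \<otimes> b = a [^] ((n - 1) * k)" for k
  proof (induction k)
    case 0 then show ?case by (simp add: bb)
  next
    case (Suc k)
    have "b \<otimes> a [^] Suc k \<otimes> b = (b \<otimes> a [^] k \<otimes> b) \<otimes> (b \<otimes> a \<otimes> b)"
      by (simp add: m_assoc bb flip: m_assoc[of b b] )
    also have "\<dots> = a [^] ((n - 1) * k) \<otimes> a [^] (n - 1)" using Suc bab by simp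
    also have "\<dots> = a [^] ((n - 1) * Suc k)" by (simp add: nat_pow_mult add.commute)
    finally show ?case .
  qed
  have swap1: "b \<otimes> a [^] k = a [^] ((n - 1) * k) \<otimes> b" for k
  proof -
    have "a [^] ((n - 1) * k) \<otimes> b = b \<otimes> a [^] k \<otimes> b \<otimes> b" by (simp add: swapk)
    also have "\<dots> = b \<otimes> a [^] k" by (simp add: m_assoc bb)
    finally show ?thesis by simp
  qed
  have swap: "b [^] e \<otimes> a [^] k = a [^] ((n - 1) ^ e * k) \<otimes> b [^] e" for e k
  proof (induction e arbitrary: k)
    case 0 then show ?case by simp
  next
    case (Suc e)
    have "b [^] Suc e \<otimes> a [^] k = b [^] e \<otimes> (b \<otimes> a [^] k)"
      by (simp add: m_assoc)
    also have "\<dots> = b [^] e \<otimes> a [^] ((n - 1) * k) \<otimes> b" by (simp add: swap1 m_assoc)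
    also have "\<dots> = a [^] ((n - 1) ^ e * ((n - 1) * k)) \<otimes> b [^] e \<otimes> b" by (simp add: Suc)
    also have "\<dots> = a [^] ((n - 1) ^ Suc e * k) \<otimes> b [^] Suc e" by (simp add: m_assoc mult_ac)
    finally show ?case .
  qed
  define S where "S = {a [^] (k::nat) \<otimes> b [^] (e::nat) | k e. True}"
  have Smul: "x \<otimes> y \<in> S" if xS: "x \<in> S" and yS: "y \<in> S" for x y
  proof -
    obtain k e where x: "x = a [^] (k::nat) \<otimes> b [^] (e::nat)" using xS S_def by auto
    obtain j f where y: "y = a [^] (j::nat) \<otimes> b [^] (f::nat)" using yS S_def by auto
    have "x \<otimes> y = a [^] k \<otimes> (b [^] e \<otimes> a [^] j) \<otimes> b [^] f" by (simp add: x y m_assoc)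
    also have "\<dots> = a [^] k \<otimes> a [^] ((n - 1) ^ e * j) \<otimes> (b [^] e \<otimes> b [^] f)"
      by (simp add: swap m_assoc)
    also have "\<dots> = a [^] (k + (n - 1) ^ e * j) \<otimes> b [^] (e + f)"
      by (simp only: nat_pow_mult ab)
    finally show ?thesis unfolding S_def by blast
  qed
  have Sin: "a [^] (k::nat) \<otimes> b [^] (e::nat) \<in> S" for k e unfolding S_def by blast
  have genS: "generate G {a, b} \<subseteq> S"
  proof
    fix x assume "x \<in> generate G {a, b}"
    then show "x \<in> S"
    proof (induction rule: generate.induct)
      case one
      have "\<one> = a [^] (0::nat) \<otimes> b [^] (0::nat)" by simp
      then show ?case using Sin by metis
    next
      case (incl h)
      have "a = a [^] (1::nat) \<otimes> b [^] (0::nat)" "b = a [^] (0::nat) \<otimes> b [^] (1::nat)" by simp_all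
      then show ?case using incl Sin by (metis insert_iff singletonD)
    next
      case (inv h)
      have ib: "inv b = b" using bb by (simp add: inv_equality)
      have "inv a = a [^] (n - 1) \<otimes> b [^] (0::nat)" "inv b = a [^] (0::nat) \<otimes> b [^] (1::nat)" by (simp_all add: ia ib)
      then show ?case using inv Sin by (metis insert_iff singletonD)
    next
      case (eng h1 h2) then show ?case using Smul by blast
    qed
  qed
  define f where "f = (\<lambda>(k::nat,e::nat). a [^] k \<otimes> b [^] e)"
  define D where "D = {..<n} \<times> {..<(2::nat)}"
  have amod: "a [^] k = a [^] (k mod n)" for k
  proof -
    have "a [^] k = a [^] (n * (k div n) + k mod n)" by (simp only: mult_div_mod_eq)
    also have "\<dots> = (a [^] n) [^] (k div n) \<otimes> a [^] (k mod n)" by (simp only: nat_pow_mult nat_pow_pow ab)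
    also have "\<dots> = a [^] (k mod n)" by (simp add: ra)
    finally show ?thesis .
  qed
  have bmod: "b [^] e = b [^] (e mod 2)" for e :: nat
  proof -
    have "b [^] e = b [^] (2 * (e div 2) + e mod 2)" by (simp only: mult_div_mod_eq)
    also have "\<dots> = (b [^] (2::nat)) [^] (e div 2) \<otimes> b [^] (e mod 2)" by (simp only: nat_pow_mult nat_pow_pow ab)
    also have "\<dots> = b [^] (e mod 2)" by (simp add: rb)
    finally show ?thesis .
  qed
  have SD: "S \<subseteq> f ` D"
  proof
    fix x assume "x \<in> S"
    then obtain k e where x: "x = a [^] (k::nat) \<otimes> b [^] (e::nat)" using S_def by auto
    then have "x = f (k mod n, e mod 2)" unfolding f_def using amod bmod by simp
    moreover have "(k mod n, e mod 2) \<in> D" unfolding D_def using n1 by auto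
    ultimately show "x \<in> f ` D" by blast
  qed
  have fD: "f ` D \<subseteq> carrier G" unfolding f_def D_def by auto
  have car: "carrier G = f ` D" using gen genS SD fD by blast
  have cD: "card D = 2 * n" unfolding D_def by simp
  have "card (f ` D) = card D" using car ordG cD unfolding order_def by simp
  then have inj: "inj_on f D" using eq_card_imp_inj_on D_def by (metis finite_SigmaI finite_lessThan eq_card_imp_inj_on)
  show "carrier G = (\<lambda>(k::nat,e::nat). a [^] k \<otimes> b [^] e) ` ({..<n} \<times> {..<(2::nat)})"
    using car f_def D_def by simp
  show "inj_on (\<lambda>(k::nat,e::nat). a [^] k \<otimes> b [^] e) ({..<n} \<times> {..<(2::nat)})"
    using inj f_def D_def by simp
  have orda: "ord a = n"
  proof -
    have d: "ord a dvd n" using ra pow_eq_id by simp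
    have p: "ord a > 0" using ord_ge_1[OF fin ab(1)] by simp
    have le: "ord a \<le> n" using d n1 by (simp add: dvd_imp_le)
    show ?thesis
    proof (rule ccontr)
      assume "ord a \<noteq> n"
      then have "ord a < n" using le by simp
      then have "(ord a, 0) \<in> D" "(0, 0) \<in> D" using n1 unfolding D_def by auto
      moreover have "f (ord a, 0) = f (0, 0)" unfolding f_def by simp
      ultimately have "ord a = 0" using inj_onD[OF inj] by (metis fst_conv)
      then show False using p by simp
    qed
  qed
  show "ord (a [^] k) = n div gcd n k" for k :: nat
    using ord_pow_gen[of a k] orda n1 by simp
  show "ord (a [^] k \<otimes> b) = 2" for k :: nat
  proof -
    have sq: "(a [^] k \<otimes> b) [^] (2::nat) = \<one>"
    proof -
      have "(a [^] k \<otimes> b) [^] (2::nat) = a [^] k \<otimes> (b \<otimes> a [^] k \<otimes> b)"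
        by (simp add: numeral_2_eq_2 m_assoc)
      also have "\<dots> = a [^] (n * k)" using n1 by (simp add: swapk nat_pow_mult algebra_simps)
      also have "\<dots> = \<one>" by (simp add: nat_pow_pow[symmetric] ra)
      finally show ?thesis .
    qed
    have ne: "a [^] k \<otimes> b \<noteq> \<one>"
    proof
      assume h: "a [^] k \<otimes> b = \<one>"
      have "f (k mod n, 1) = f (0, 0)" unfolding f_def using h amod by simp
      moreover have "(k mod n, 1) \<in> D" "(0, 0) \<in> D" using n1 unfolding D_def by auto
      ultimately show False using inj_onD[OF inj] by (metis Pair_inject zero_neq_one)
    qed
    have "ord (a [^] k \<otimes> b) dvd 2" using sq pow_eq_id by simp
    moreover have "ord (a [^] k \<otimes> b) \<noteq> 1" using ne ord_eq_1 by simp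
    moreover have "ord (a [^] k \<otimes> b) \<noteq> 0" using ord_ge_1[OF fin, of "a [^] k \<otimes> b"] by simp
    moreover have "ord (a [^] k \<otimes> b) \<le> 2" using calculation(1) by (rule dvd_imp_le) simp
    ultimately show ?thesis by linarith
  qed
qed
theorem mainTheorem17:
  fixes G :: "('a, 'b) monoid_scheme" and n :: nat and x :: 'a
  assumes "n \<ge> 3" and "odd n" and "is_dihedral G n" and "x \<in> carrier G"
  shows "int (OD_degree G x) =
    (let m = group.ord G x in
      if m = 1 then 2 * int n - 1
      else if m = 2 then 1
      else int m - 2 * int (totient m) + (\<Sum>l\<in>{l. l dvd n div m}. int (totient (l * m))))"
proof -
  from assms(3) obtain a b where grp: "group G" and fin: "finite (carrier G)" and ordG: "order G = 2 * n"
    and ab: "a \<in> carrier G" "b \<in> carrier G" and gen: "generate G {a, b} = carrier G"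
    and ra: "a [^]\<^bsub>G\<^esub> n = \<one>\<^bsub>G\<^esub>" and rb: "b [^]\<^bsub>G\<^esub> (2::nat) = \<one>\<^bsub>G\<^esub>"
    and rab: "(a \<otimes>\<^bsub>G\<^esub> b) [^]\<^bsub>G\<^esub> (2::nat) = \<one>\<^bsub>G\<^esub>"
    unfolding is_dihedral_def by blast
  interpret group G by (rule grp)
  have n1: "n \<ge> 1" and n0: "n > 0" using assms(1) by auto
  define F where "F = (\<lambda>(k::nat,e::nat). a [^]\<^bsub>G\<^esub> k \<otimes>\<^bsub>G\<^esub> b [^]\<^bsub>G\<^esub> e)"
  define D where "D = {..<n} \<times> {..<(2::nat)}"
  note st = dih_struct[OF fin ordG n1 ab gen ra rb rab]
  have car: "carrier G = F ` D" using st(1) unfolding F_def D_def .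
  have inj: "inj_on F D" using st(2) unfolding F_def D_def .
  have ordF: "ord (F p) = (if snd p = 0 then n div gcd n (fst p) else 2)" if pD: "p \<in> D" for p
  proof -
    obtain k e where p: "p = (k, e)" "e < 2" using pD D_def by auto
    show ?thesis
    proof (cases "e = 0")
      case True then show ?thesis using p st(3)[of k] ab by (simp add: F_def)
    next
      case False then have "e = 1" using p by simp
      then show ?thesis using p st(4)[of k] ab by (simp add: F_def)
    qed
  qed
  define m where "m = ord x"
  obtain p0 where p0: "p0 \<in> D" "x = F p0" using car assms(4) by auto
  have mcase: "m = 2 \<or> m dvd n" using ordF[OF p0(1)] p0(2) unfolding m_def
    by (auto simp: div_dvd_div[symmetric] dvd_div_eq_mult) (metis dvd_div_mult_self gcd_dvd1 dvd_triv_left)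
  have mpos: "m > 0" unfolding m_def using ord_ge_1[OF fin assms(4)] by simp
  define Q where "Q = (\<lambda>d. d \<noteq> m \<and> (m dvd d \<or> d dvd m))"
  have adj: "OD_adj G x y \<longleftrightarrow> Q (ord y)" for y
    unfolding OD_adj_def Q_def m_def by auto
  have "OD_degree G x = card {y \<in> carrier G. Q (ord y)}"
    unfolding OD_degree_def using adj by simp
  also have "{y \<in> carrier G. Q (ord y)} = F ` {p \<in> D. Q (ord (F p))}"
    using car by auto
  also have "card (F ` {p \<in> D. Q (ord (F p))}) = card {p \<in> D. Q (ord (F p))}"
    by (rule card_image) (rule inj_on_subset[OF inj], auto)
  also have "{p \<in> D. Q (ord (F p))} =
      (\<lambda>k. (k, 0::nat)) ` {k \<in> {..<n}. Q (n div gcd n k)} \<union> (\<lambda>k. (k, 1::nat)) ` {k \<in> {..<n}. Q 2}"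
  proof (intro equalityI subsetI)
    fix p assume p: "p \<in> {p \<in> D. Q (ord (F p))}"
    then obtain k e where ke: "p = (k, e)" "k < n" "e < 2" unfolding D_def by auto
    show "p \<in> (\<lambda>k. (k, 0::nat)) ` {k \<in> {..<n}. Q (n div gcd n k)} \<union> (\<lambda>k. (k, 1::nat)) ` {k \<in> {..<n}. Q 2}"
    proof (cases "e = 0")
      case True then show ?thesis using p ke ordF[of p] by auto
    next
      case False then have "e = 1" using ke by simp
      then show ?thesis using p ke ordF[of p] by auto
    qed
  next
    fix p assume "p \<in> (\<lambda>k. (k, 0::nat)) ` {k \<in> {..<n}. Q (n div gcd n k)} \<union> (\<lambda>k. (k, 1::nat)) ` {k \<in> {..<n}. Q 2}"
    then show "p \<in> {p \<in> D. Q (ord (F p))}" using ordF unfolding D_def by auto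
  qed
  also have "card ((\<lambda>k. (k, 0::nat)) ` {k \<in> {..<n}. Q (n div gcd n k)} \<union> (\<lambda>k. (k, 1::nat)) ` {k \<in> {..<n}. Q 2})
      = card {k \<in> {..<n}. Q (n div gcd n k)} + card {k \<in> {..<n}. Q 2}"
    by (subst card_Un_disjoint) (auto simp: card_image inj_on_def)
  also have "card {k \<in> {..<n}. Q (n div gcd n k)} = (\<Sum>d\<in>{d. d dvd n \<and> Q d}. totient d)"
    by (rule count_sum[OF n0])
  also have "card {k \<in> {..<n}. Q 2} = (if Q 2 then n else 0)" by simp
  finally have deg: "OD_degree G x = (\<Sum>d\<in>{d. d dvd n \<and> Q d}. totient d) + (if Q 2 then n else 0)" .
  show ?thesis
  proof -
    have "int (OD_degree G x) =
      (if m = 1 then 2 * int n - 1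
      else if m = 2 then 1
      else int m - 2 * int (totient m) + (\<Sum>l\<in>{l. l dvd n div m}. int (totient (l * m))))"
    proof (cases "m = 1")
      case True
      then have Q: "Q = (\<lambda>d. d \<noteq> 1)" unfolding Q_def by auto
      have "(\<Sum>d\<in>{d. d dvd n \<and> d \<noteq> 1}. totient d) + 1 = n"
      proof -
        have "{d. d dvd n} = insert 1 {d. d dvd n \<and> d \<noteq> 1}" by auto
        moreover have "finite {d. d dvd n \<and> d \<noteq> 1}" using n0 by auto
        ultimately show ?thesis using totient_divisor_sum[of n] by simp
      qed
      then have "OD_degree G x = 2 * n - 1" using deg Q by simp
      then show ?thesis using True n0 by (simp add: of_nat_diff)
    next
      case m1: False
      show ?thesis
      proof (cases "m = 2")
        case True
        have nQ: "\<not> Q 2" unfolding Q_def using True by simp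
        have S: "{d. d dvd n \<and> Q d} = {1}"
        proof (intro equalityI subsetI)
          fix d assume d: "d \<in> {d. d dvd n \<and> Q d}"
          then have "odd d" using assms(2) dvd_trans by blast
          moreover have "d > 0" using d n0 by (auto intro: Nat.gr0I)
          ultimately show "d \<in> {1}" using d True unfolding Q_def
            by (auto dest: dvd_imp_le)
        next
          fix d assume "d \<in> {1::nat}" then show "d \<in> {d. d dvd n \<and> Q d}" unfolding Q_def using True by auto
        qed
        show ?thesis using deg nQ S True m1 by simp
      next
        case m2: False
        have mdvd: "m dvd n" using mcase m2 by simp
        have nQ: "\<not> Q 2"
        proof
          assume "Q 2"
          then have "m dvd 2 \<or> 2 dvd m" using m2 unfolding Q_def by auto
          then show False
          proof
            assume "m dvd 2" then have "m \<le> 2" by (rule dvd_imp_le) simp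
            then show False using m1 m2 mpos by linarith
          next
            assume "2 dvd m" then show False using mdvd assms(2) dvd_trans by blast
          qed
        qed
        have "int (OD_degree G x) = int (\<Sum>d\<in>{d. d dvd n \<and> d \<noteq> m \<and> (d dvd m \<or> m dvd d)}. totient d)"
        proof -
          have "OD_degree G x = (\<Sum>d\<in>{d. d dvd n \<and> Q d}. totient d)" using deg nQ by simp
          moreover have "{d. d dvd n \<and> Q d} = {d. d dvd n \<and> d \<noteq> m \<and> (d dvd m \<or> m dvd d)}"
            unfolding Q_def by blast
          ultimately show ?thesis by simp
        qed
        also have "\<dots> = int m - 2 * int (totient m) + (\<Sum>l\<in>{l. l dvd n div m}. int (totient (l * m)))"
          by (rule sumQ[OF n0 mdvd mpos])
        finally show ?thesis using m1 m2 by simp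
      qed
    qed
    then show ?thesis unfolding m_def Let_def by simp
  qed
qed

end
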